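(* Let $n\ge2$, $U\subseteq\mathbb{R}^n$ open, and $f,g\in C(U,\mathbb{R}^n)$ both injective. Let $W$ be a connected open subset of $\mathbb{R}^n$ with $\overline W$ a compact subset of $f(U)$. Choose $y\in W$ and $\delta,\eta>0$ with $y+Z_{\delta,\eta}(0)\subseteq W$ such that the closure of $W_{\delta,\eta}:=W+Z_{\delta,\eta}(0)$ is still a subset of $f(U)$. Put $A:=f^{-1}(\overline{W_{\delta,\eta}})$ and write $f=(\hat f,f^n)$, $g=(\hat g,g^n)$. If $$\|\hat g-\hat f\|_{\infty,A}<\delta\quad\text{and}\quad\|g^n-f^n\|_{\infty,A}<\eta,$$ then $\overline W\subseteq g(A)^\circ$ (the interior of $g(A)$).
   Context: For $x=(x^1,\dots,x^n)\in\mathbb{R}^n$ write $\hat x=(x^1,\dots,x^{n-1})$; for a map $f=(f^1,\dots,f^n)$ write $\hat f=(f^1,\dots,f^{n-1})$. The cylinder $Z_{\delta,\eta}(x):=B_\delta(\hat x)\times(x^n-\eta,x^n+\eta)$, where $B_\delta(\hat x)$ is the open Euclidean ball in $\mathbb{R}^{n-1}$. $W+Z$ denotes the Minkowski sum. *)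

theory Defs
  imports "HOL-Analysis.Analysis"
begin

text \<open>We model R^n as (real^'m) \<times> real with n = CARD('m) + 1 (so n \<ge> 2 automatically).
  A point x = (x_hat, x_n); fst gives the first n-1 coordinates, snd the last one.
  The product norm is the Euclidean norm.\<close>

definition cylinder :: "real \<Rightarrow> real \<Rightarrow> (real^'m) \<times> real \<Rightarrow> ((real^'m) \<times> real) set" where
  "cylinder \<delta> \<eta> x = ball (fst x) \<delta> \<times> {snd x - \<eta> <..< snd x + \<eta>}"

definition minkowski_sum :: "'a::plus set \<Rightarrow> 'a set \<Rightarrow> 'a set" where
  "minkowski_sum S T = {s + t | s t. s \<in> S \<and> t \<in> T}"

end

theory Submission
  imports Defs
begin

lemma cyl0: "t \<in> cylinder \<delta> \<eta> (0::(real^'m) \<times> real) \<longleftrightarrow> norm (fst t) < \<delta> \<and> \<bar>snd t\<bar> < \<eta>"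
  by (cases t) (auto simp: cylinder_def dist_norm abs_less_iff)

lemma open_cyl: "open (cylinder \<delta> \<eta> (x::(real^'m) \<times> real))"
  unfolding cylinder_def by (intro open_Times) auto

lemma mink_eq: "minkowski_sum S T = (\<lambda>(x,y). x + y) ` (S \<times> T)"
  unfolding minkowski_sum_def by auto

lemma mink_UN: "minkowski_sum S T = (\<Union>w\<in>S. (\<lambda>t. w + t) ` T)"
  unfolding minkowski_sum_def by auto

lemma closure_plus_open:
  fixes W Z :: "'a::real_normed_vector set"
  assumes "open Z" "w \<in> closure W" "t \<in> Z"
  shows "w + t \<in> minkowski_sum W Z"
proof -
  obtain e where e: "e > 0" "ball t e \<subseteq> Z" using assms(1,3) open_contains_ball by blast
  obtain w' where w': "w' \<in> W" "dist w' w < e" using assms(2) e(1) closure_approachable by blast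
  have "t + w - w' \<in> ball t e" using w'(2) by (simp add: dist_norm)
  hence "t + w - w' \<in> Z" using e by blast
  moreover have "w + t = w' + (t + w - w')" by simp
  ultimately show ?thesis using w'(1) unfolding minkowski_sum_def by blast
qed

theorem theorem8p1:
  fixes U W :: "((real^'m) \<times> real) set"
    and f g :: "(real^'m) \<times> real \<Rightarrow> (real^'m) \<times> real"
    and y :: "(real^'m) \<times> real"
    and \<delta> \<eta> :: real
  assumes "open U"
    and "continuous_on U f" and "inj_on f U"
    and "continuous_on U g" and "inj_on g U"
    and "connected W" and "open W"
    and "compact (closure W)" and "closure W \<subseteq> f ` U"
    and "y \<in> W" and "\<delta> > 0" and "\<eta> > 0"
    and "(\<lambda>z. y + z) ` cylinder \<delta> \<eta> 0 \<subseteq> W"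
    and "closure (minkowski_sum W (cylinder \<delta> \<eta> 0)) \<subseteq> f ` U"
    and "A = {x \<in> U. f x \<in> closure (minkowski_sum W (cylinder \<delta> \<eta> 0))}"
    and "(SUP x\<in>A. norm (fst (g x) - fst (f x))) < \<delta>"
    and "(SUP x\<in>A. \<bar>snd (g x) - snd (f x)\<bar>) < \<eta>"
  shows "closure W \<subseteq> interior (g ` A)"
proof -
  note a = assms
  define Z where "Z = cylinder \<delta> \<eta> (0::(real^'m) \<times> real)"
  define Om where "Om = minkowski_sum W Z"
  define K where "K = closure Om"
  have Zo: "open Z" unfolding Z_def by (rule open_cyl)
  have Oo: "open Om" unfolding Om_def mink_UN using Zo by (intro open_UN ballI open_translation)
  have Z0: "0 \<in> Z" unfolding Z_def cyl0 using a(11,12) by simp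
  have WO: "W \<subseteq> Om"
  proof
    fix w assume "w \<in> W"
    hence "w + 0 \<in> Om" unfolding Om_def minkowski_sum_def using Z0 by blast
    thus "w \<in> Om" by simp
  qed
  have cWO: "w + t \<in> Om" if "w \<in> closure W" "t \<in> Z" for w t
    unfolding Om_def using closure_plus_open[OF Zo that] .
  have bZ: "bounded Z"
  proof -
    have "Z \<subseteq> cball 0 \<delta> \<times> cball 0 \<eta>" unfolding Z_def cylinder_def by (auto simp: dist_norm)
    thus ?thesis using bounded_subset[OF bounded_Times[OF bounded_cball bounded_cball]] by blast
  qed
  have bW: "bounded W" using a(8) compact_imp_bounded bounded_closure_image
    by (metis bounded_subset closure_subset)
  have Kc: "compact K" unfolding K_def Om_def mink_eq
    using bounded_plus[OF bW bZ] by (simp add: compact_closure)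
  obtain finv where hom: "homeomorphism U (f ` U) f finv"
    using invariance_of_domain_homeomorphism[OF a(1,2) _ a(3)] by auto
  have KfU: "K \<subseteq> f ` U" using a(14) unfolding K_def Om_def Z_def .
  have Adef: "A = {x \<in> U. f x \<in> K}" using a(15) unfolding K_def Om_def Z_def .
  have AK: "A = finv ` K"
    using hom KfU unfolding Adef homeomorphism_def by (auto simp: image_iff) (metis)
  have Ac: "compact A" unfolding AK
    using hom KfU unfolding homeomorphism_def
    by (meson Kc compact_continuous_image continuous_on_subset)
  have AU: "A \<subseteq> U" unfolding Adef by auto
  have contfA: "continuous_on A f" using a(2) AU continuous_on_subset by blast
  have contgA: "continuous_on A g" using a(4) AU continuous_on_subset by blast
  define d1 where "d1 = (SUP x\<in>A. norm (fst (g x) - fst (f x)))"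
  define d2 where "d2 = (SUP x\<in>A. \<bar>snd (g x) - snd (f x)\<bar>)"
  have bdd1: "bdd_above ((\<lambda>x. norm (fst (g x) - fst (f x))) ` A)"
    apply (rule bounded_imp_bdd_above, rule compact_imp_bounded, rule compact_continuous_image[OF _ Ac])
    by (intro continuous_intros contfA contgA)
  have bdd2: "bdd_above ((\<lambda>x. \<bar>snd (g x) - snd (f x)\<bar>) ` A)"
    apply (rule bounded_imp_bdd_above, rule compact_imp_bounded, rule compact_continuous_image[OF _ Ac])
    by (intro continuous_intros contfA contgA)
  have le1: "norm (fst (g x) - fst (f x)) \<le> d1" if "x \<in> A" for x
    unfolding d1_def using cSUP_upper[OF that bdd1] .
  have le2: "\<bar>snd (g x) - snd (f x)\<bar> \<le> d2" if "x \<in> A" for x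
    unfolding d2_def using cSUP_upper[OF that bdd2] .
  have d1l: "d1 < \<delta>" and d2l: "d2 < \<eta>" using a(16,17) d1_def d2_def by auto
  have diffZ: "f x - g x \<in> Z" if "x \<in> A" for x
  proof -
    have "norm (fst (f x - g x)) < \<delta>" using le1[OF that] d1l by (simp add: norm_minus_commute)
    moreover have "\<bar>snd (f x - g x)\<bar> < \<eta>" using le2[OF that] d2l by simp
    ultimately show ?thesis unfolding Z_def cyl0 by simp
  qed
  define V where "V = {x \<in> U. f x \<in> Om}"
  have Vo: "open V"
  proof -
    have "open (f -` Om \<inter> U)" using a(1,2) Oo continuous_on_open_vimage by blast
    moreover have "V = f -` Om \<inter> U" unfolding V_def by auto
    ultimately show ?thesis by simp
  qed
  have VA: "V \<subseteq> A" unfolding V_def Adef K_def using closure_subset by auto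
  have gVo: "open (g ` V)"
    using VA AU by (intro invariance_of_domain Vo continuous_on_subset[OF a(4)] inj_on_subset[OF a(5)]) auto
  have key: "closure W \<inter> closure (g ` V) \<subseteq> g ` V"
  proof
    fix w assume w: "w \<in> closure W \<inter> closure (g ` V)"
    have "closure (g ` V) \<subseteq> g ` A"
      using compact_continuous_image[OF contgA Ac] VA
      by (meson closure_minimal compact_imp_closed image_mono)
    then obtain x where x: "x \<in> A" "w = g x" using w by auto
    have "f x = w + (f x - g x)" using x by simp
    also have "\<dots> \<in> Om" using cWO w diffZ[OF x(1)] by blast
    finally have "x \<in> V" using x AU unfolding V_def by auto
    thus "w \<in> g ` V" using x by auto
  qed
  have yV: "y \<in> g ` V"
  proof -
    have d1n: "0 \<le> d1" and d2n: "0 \<le> d2"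
    proof -
      have "y \<in> f ` U" using a(9,10) closure_subset by blast
      then obtain x0 where "x0 \<in> U" "f x0 = y" by auto
      hence "x0 \<in> A" unfolding Adef K_def using WO a(10) closure_subset by auto
      thus "0 \<le> d1" "0 \<le> d2" using le1 le2 by (meson norm_ge_zero order_trans abs_ge_zero)+
    qed
    define C where "C = cball (fst y) d1 \<times> cball (snd y) d2"
    have CW: "C \<subseteq> W"
    proof
      fix c assume c: "c \<in> C"
      have "c - y \<in> Z" unfolding Z_def cyl0 using c d1l d2l unfolding C_def
        by (cases c; cases y) (auto simp: dist_norm norm_minus_commute abs_minus_commute real_norm_def)
      hence "y + (c - y) \<in> W" using a(13) unfolding Z_def by blast
      thus "c \<in> W" by simp
    qed
    have CA: "finv c \<in> A" and fc: "f (finv c) = c" if "c \<in> C" for c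
    proof -
      have "c \<in> f ` U" using CW that a(9) closure_subset by blast
      thus fc: "f (finv c) = c" using hom unfolding homeomorphism_def by auto
      have "finv c \<in> U" using \<open>c \<in> f ` U\<close> hom unfolding homeomorphism_def by auto
      moreover have "c \<in> K" using CW WO that closure_subset unfolding K_def by blast
      ultimately show "finv c \<in> A" unfolding Adef using fc by auto
    qed
    define T where "T z = z - g (finv z) + y" for z
    have contT: "continuous_on C T"
    proof -
      have "continuous_on C finv"
        using hom CW a(9) closure_subset unfolding homeomorphism_def
        by (meson continuous_on_subset order_trans)
      moreover have "finv ` C \<subseteq> A" using CA by auto
      ultimately have "continuous_on C (g \<circ> finv)" using continuous_on_compose contgA continuous_on_subset by blast
      thus ?thesis unfolding T_def by (intro continuous_intros) (auto simp: o_def)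
    qed
    have TC: "T \<in> C \<rightarrow> C"
    proof
      fix z assume z: "z \<in> C"
      have "norm (fst (g (finv z)) - fst (f (finv z))) \<le> d1" using le1[OF CA[OF z]] .
      moreover have "\<bar>snd (g (finv z)) - snd (f (finv z))\<bar> \<le> d2" using le2[OF CA[OF z]] .
      ultimately show "T z \<in> C" unfolding C_def T_def using fc[OF z]
        by (cases z; cases y; cases "g (finv z)") (auto simp: dist_norm real_norm_def)
    qed
    have "compact C" "convex C" "C \<noteq> {}" unfolding C_def
      using d1n d2n by (auto intro!: compact_Times convex_Times)
    then obtain z where z: "z \<in> C" "T z = z" using brouwer[OF _ _ _ contT TC] by blast
    hence "g (finv z) = y" unfolding T_def by (simp add: algebra_simps)
    moreover have "finv z \<in> V" using CA[OF z(1)] fc[OF z(1)] CW z(1) WO AU unfolding V_def by auto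
    ultimately show ?thesis by force
  qed
  have WgV: "W \<subseteq> g ` V"
  proof -
    let ?T = "W \<inter> g ` V"
    have "openin (top_of_set W) ?T" using gVo by (simp add: openin_open_Int)
    moreover have "closedin (top_of_set W) ?T"
    proof -
      have "?T = W \<inter> closure (g ` V)" using key closure_subset[of W] closure_subset[of "g ` V"] by blast
      thus ?thesis by (simp add: closedin_closed_Int)
    qed
    ultimately have "?T = {} \<or> ?T = W" using a(6) connected_clopen by blast
    thus ?thesis using yV a(10) by blast
  qed
  have "closure W \<subseteq> g ` V"
    using key closure_mono[OF WgV] by blast
  thus ?thesis using gVo VA by (meson image_mono interior_maximal order_trans)
qed

end
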